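(* In any correlational scenario, every deterministic correlation whose signalling graph is not a siblings-on-cycles graph is antinomic, i.e. it is not deterministically consistent.
   Context: Parties $S_1,\dots,S_N$ with finite setting sets $A_k$ and outcome sets $X_k$; a deterministic correlation is $p(\vec x|\vec a)=\delta_{\vec x,f(\vec a)}$ with $f_k:\vec A\to X_k$. Its signalling graph is the directed graph on vertex set $[N]$ with an edge $k\to l$ ($k\ne l$) iff there exist $\vec a,\vec a'$ differing only in the $k$-th entry with $f_l(\vec a)\neq f_l(\vec a')$. A directed graph is a siblings-on-cycles graph if every directed cycle $v_1\to v_2\to\dots\to v_c\to v_1$ ($c\ge2$, distinct vertices) contains two distinct vertices $v_{s_1},v_{s_2}$ having a common parent $v_p$ (edges $v_p\to v_{s_1}$ and $v_p\to v_{s_2}$). Classical processes: for finite sets $I_k,O_k$, a conditional distribution $p(\vec i|\vec o)$ is a classical process if for all finite $A_k,X_k$ and all local interventions $p(x_k,o_k|a_k,i_k)$, $\sum_{\vec i,\vec o}\prod_k p(x_k,o_k|a_k,i_k)p(\vec i|\vec o)$ is a valid conditional distribution of $\vec x$ given $\vec a$. A process function is $\omega:\vec O\to\vec I$ such that $\delta_{\vec i,\omega(\vec o)}$ is a classical process. The deterministic-extrema polytope is the convex hull of $\{\delta_{\vec i,\omega(\vec o)}:\omega\text{ a process function}\}$. A correlation is deterministically consistent if $p(\vec x|\vec a)=\sum_{\vec i,\vec o}\prod_k p(x_k,o_k|a_k,i_k)\,p(\vec i|\vec o)$ for some finite $I_k,O_k$, local interventions $p(x_k,o_k|a_k,i_k)$,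 and $p(\vec i|\vec o)$ in the deterministic-extrema polytope; otherwise it is antinomic. *)

theory Defs
  imports Complex_Main "HOL-Library.FuncSet"
begin

text \<open>Parties are indexed by {..<N}. Joint settings/outcomes are extensional
 functions in PiE {..<N} S. Process input/output spaces I_k, O_k are finite
 sets of naturals (any finite set embeds in nat).\<close>

text \<open>A local intervention family Q k x ov a i = p(x_k,o_k | a_k,i_k) for party k.\<close>
definition local_interventions ::
  "nat \<Rightarrow> (nat \<Rightarrow> 'a set) \<Rightarrow> (nat \<Rightarrow> 'x set) \<Rightarrow> (nat \<Rightarrow> nat set) \<Rightarrow> (nat \<Rightarrow> nat set)
   \<Rightarrow> (nat \<Rightarrow> 'x \<Rightarrow> nat \<Rightarrow> 'a \<Rightarrow> nat \<Rightarrow> real) \<Rightarrow> bool" where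
  "local_interventions N A X In Out Q \<longleftrightarrow>
     (\<forall>k<N. \<forall>a\<in>A k. \<forall>i\<in>In k.
        (\<forall>x\<in>X k. \<forall>ov\<in>Out k. 0 \<le> Q k x ov a i) \<and>
        (\<Sum>x\<in>X k. \<Sum>ov\<in>Out k. Q k x ov a i) = 1)"

definition compose ::
  "nat \<Rightarrow> (nat \<Rightarrow> nat set) \<Rightarrow> (nat \<Rightarrow> nat set) \<Rightarrow> (nat \<Rightarrow> 'x \<Rightarrow> nat \<Rightarrow> 'a \<Rightarrow> nat \<Rightarrow> real)
   \<Rightarrow> ((nat \<Rightarrow> nat) \<Rightarrow> (nat \<Rightarrow> nat) \<Rightarrow> real) \<Rightarrow> (nat \<Rightarrow> 'x) \<Rightarrow> (nat \<Rightarrow> 'a) \<Rightarrow> real" where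
  "compose N In Out Q w x a =
     (\<Sum>i\<in>PiE {..<N} In. \<Sum>ov\<in>PiE {..<N} Out.
        (\<Prod>k<N. Q k (x k) (ov k) (a k) (i k)) * w i ov)"

definition cond_distr ::
  "nat \<Rightarrow> (nat \<Rightarrow> 'a set) \<Rightarrow> (nat \<Rightarrow> 'x set) \<Rightarrow> ((nat \<Rightarrow> 'x) \<Rightarrow> (nat \<Rightarrow> 'a) \<Rightarrow> real) \<Rightarrow> bool" where
  "cond_distr N A X r \<longleftrightarrow>
     (\<forall>a\<in>PiE {..<N} A. (\<forall>x\<in>PiE {..<N} X. 0 \<le> r x a) \<and> (\<Sum>x\<in>PiE {..<N} X. r x a) = 1)"

definition classical_process ::
  "nat \<Rightarrow> (nat \<Rightarrow> nat set) \<Rightarrow> (nat \<Rightarrow> nat set) \<Rightarrow> ((nat \<Rightarrow> nat) \<Rightarrow> (nat \<Rightarrow> nat) \<Rightarrow> real) \<Rightarrow> bool" where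
  "classical_process N In Out w \<longleftrightarrow>
     cond_distr N Out In w \<and>
     (\<forall>(A :: nat \<Rightarrow> nat set) (X :: nat \<Rightarrow> nat set)
        (Q :: nat \<Rightarrow> nat \<Rightarrow> nat \<Rightarrow> nat \<Rightarrow> nat \<Rightarrow> real).
        (\<forall>k<N. finite (A k) \<and> finite (X k)) \<longrightarrow> local_interventions N A X In Out Q \<longrightarrow>
        cond_distr N A X (compose N In Out Q w))"

definition delta_fun :: "((nat \<Rightarrow> nat) \<Rightarrow> (nat \<Rightarrow> nat)) \<Rightarrow> (nat \<Rightarrow> nat) \<Rightarrow> (nat \<Rightarrow> nat) \<Rightarrow> real" where
  "delta_fun \<omega> i ov = (if i = \<omega> ov then 1 else 0)"

definition process_function ::
  "nat \<Rightarrow> (nat \<Rightarrow> nat set) \<Rightarrow> (nat \<Rightarrow> nat set) \<Rightarrow> ((nat \<Rightarrow> nat) \<Rightarrow> (nat \<Rightarrow> nat)) \<Rightarrow> bool" where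
  "process_function N In Out \<omega> \<longleftrightarrow>
     \<omega> \<in> PiE {..<N} Out \<rightarrow> PiE {..<N} In \<and> classical_process N In Out (delta_fun \<omega>)"

definition det_extrema_polytope ::
  "nat \<Rightarrow> (nat \<Rightarrow> nat set) \<Rightarrow> (nat \<Rightarrow> nat set) \<Rightarrow> ((nat \<Rightarrow> nat) \<Rightarrow> (nat \<Rightarrow> nat) \<Rightarrow> real) \<Rightarrow> bool" where
  "det_extrema_polytope N In Out w \<longleftrightarrow>
     (\<exists>(n::nat) (c :: nat \<Rightarrow> real) (\<Omega> :: nat \<Rightarrow> (nat \<Rightarrow> nat) \<Rightarrow> (nat \<Rightarrow> nat)).
        (\<forall>j<n. 0 \<le> c j \<and> process_function N In Out (\<Omega> j)) \<and> (\<Sum>j<n. c j) = 1 \<and>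
        (\<forall>i\<in>PiE {..<N} In. \<forall>ov\<in>PiE {..<N} Out. w i ov = (\<Sum>j<n. c j * delta_fun (\<Omega> j) i ov)))"

definition det_consistent ::
  "nat \<Rightarrow> (nat \<Rightarrow> 'a set) \<Rightarrow> (nat \<Rightarrow> 'x set) \<Rightarrow> ((nat \<Rightarrow> 'x) \<Rightarrow> (nat \<Rightarrow> 'a) \<Rightarrow> real) \<Rightarrow> bool" where
  "det_consistent N A X p \<longleftrightarrow>
     (\<exists>(In :: nat \<Rightarrow> nat set) (Out :: nat \<Rightarrow> nat set) Q w.
        (\<forall>k<N. finite (In k) \<and> finite (Out k)) \<and>
        local_interventions N A X In Out Q \<and>
        det_extrema_polytope N In Out w \<and>
        (\<forall>a\<in>PiE {..<N} A. \<forall>x\<in>PiE {..<N} X. p x a = compose N In Out Q w x a))"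

definition antinomic ::
  "nat \<Rightarrow> (nat \<Rightarrow> 'a set) \<Rightarrow> (nat \<Rightarrow> 'x set) \<Rightarrow> ((nat \<Rightarrow> 'x) \<Rightarrow> (nat \<Rightarrow> 'a) \<Rightarrow> real) \<Rightarrow> bool" where
  "antinomic N A X p \<longleftrightarrow> \<not> det_consistent N A X p"

definition det_corr :: "nat \<Rightarrow> (nat \<Rightarrow> (nat \<Rightarrow> 'a) \<Rightarrow> 'x) \<Rightarrow> (nat \<Rightarrow> 'x) \<Rightarrow> (nat \<Rightarrow> 'a) \<Rightarrow> real" where
  "det_corr N f x a = (if (\<forall>k<N. x k = f k a) then 1 else 0)"

definition signals :: "nat \<Rightarrow> (nat \<Rightarrow> 'a set) \<Rightarrow> (nat \<Rightarrow> (nat \<Rightarrow> 'a) \<Rightarrow> 'x) \<Rightarrow> nat \<Rightarrow> nat \<Rightarrow> bool" where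
  "signals N A f k l \<longleftrightarrow> k < N \<and> l < N \<and> k \<noteq> l \<and>
     (\<exists>a\<in>PiE {..<N} A. \<exists>a'\<in>PiE {..<N} A. (\<forall>j. j \<noteq> k \<longrightarrow> a j = a' j) \<and> f l a \<noteq> f l a')"

definition directed_cycle :: "nat \<Rightarrow> (nat \<Rightarrow> nat \<Rightarrow> bool) \<Rightarrow> nat list \<Rightarrow> bool" where
  "directed_cycle N E vs \<longleftrightarrow> length vs \<ge> 2 \<and> distinct vs \<and> set vs \<subseteq> {..<N} \<and>
     (\<forall>j. Suc j < length vs \<longrightarrow> E (vs ! j) (vs ! Suc j)) \<and> E (last vs) (hd vs)"

definition siblings_on_cycles :: "nat \<Rightarrow> (nat \<Rightarrow> nat \<Rightarrow> bool) \<Rightarrow> bool" where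
  "siblings_on_cycles N E \<longleftrightarrow>
     (\<forall>vs. directed_cycle N E vs \<longrightarrow>
        (\<exists>s1\<in>set vs. \<exists>s2\<in>set vs. s1 \<noteq> s2 \<and> (\<exists>v<N. E v s1 \<and> E v s2)))"

end

theory Submission
  imports Defs
begin



locale pf =
  fixes N :: nat and In Out :: "nat \<Rightarrow> nat set" and \<omega> :: "(nat\<Rightarrow>nat) \<Rightarrow> (nat\<Rightarrow>nat)"
  assumes \<omega>_fun: "\<omega> \<in> PiE {..<N} Out \<rightarrow> PiE {..<N} In"
  and uniq: "\<And>h. (\<forall>k<N. \<forall>i\<in>In k. h k i \<in> Out k) \<Longrightarrow>
        \<exists>!z. z \<in> PiE {..<N} Out \<and> (\<forall>k<N. z k = h k (\<omega> z k))"
begin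

definition fp where "fp h z \<longleftrightarrow> z \<in> PiE {..<N} Out \<and> (\<forall>k<N. z k = h k (\<omega> z k))"

lemma fp_ex: "(\<forall>k<N. \<forall>i\<in>In k. h k i \<in> Out k) \<Longrightarrow> \<exists>z. fp h z"
  using uniq[of h] unfolding fp_def by blast

lemma fp_un: "(\<forall>k<N. \<forall>i\<in>In k. h k i \<in> Out k) \<Longrightarrow> fp h z1 \<Longrightarrow> fp h z2 \<Longrightarrow> z1 = z2"
  using uniq[of h] unfolding fp_def by blast

lemma \<omega>_in: "z \<in> PiE {..<N} Out \<Longrightarrow> k < N \<Longrightarrow> \<omega> z k \<in> In k"
  using \<omega>_fun by (auto simp: PiE_def Pi_def)

lemma fp_in: "fp h z \<Longrightarrow> k < N \<Longrightarrow> z k \<in> Out k"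
  unfolding fp_def by (meson PiE_mem lessThan_iff)

lemma indep:
  assumes l: "l < N"
    and h1: "\<forall>k<N. \<forall>i\<in>In k. h1 k i \<in> Out k"
    and h2: "\<forall>k<N. \<forall>i\<in>In k. h2 k i \<in> Out k"
    and eq: "\<forall>k<N. k \<noteq> l \<longrightarrow> h1 k = h2 k"
    and z1: "fp h1 z1" and z2: "fp h2 z2"
  shows "\<omega> z1 l = \<omega> z2 l"
proof -
  define H where "H u = (\<lambda>k. if k = l then (\<lambda>_::nat. u) else h1 k)" for u :: nat
  have Hv: "\<forall>k<N. \<forall>i\<in>In k. H u k i \<in> Out k" if "u \<in> Out l" for u
    using that h1 by (auto simp: H_def)
  define F where "F u = (THE z. fp (H u) z)" for u
  have F: "fp (H u) (F u)" if uu: "u \<in> Out l" for u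
  proof -
    obtain z where "fp (H u) z" using fp_ex[OF Hv[OF uu]] by blast
    moreover have "\<And>z'. fp (H u) z' \<Longrightarrow> z' = z" using fp_un[OF Hv[OF uu]] calculation by blast
    ultimately show ?thesis unfolding F_def by (rule theI)
  qed
  define J where "J u = \<omega> (F u) l" for u
  have Jc: "J u1 = J u2" if u1: "u1 \<in> Out l" and u2: "u2 \<in> Out l" for u1 u2
  proof (rule ccontr)
    assume ne: "J u1 \<noteq> J u2"
    define h where "h = (\<lambda>k. if k = l then (\<lambda>i. if i = J u1 then u2 else u1) else h1 k)"
    have hv: "\<forall>k<N. \<forall>i\<in>In k. h k i \<in> Out k" using h1 u1 u2 by (auto simp: h_def)
    obtain z where z: "fp h z" using fp_ex[OF hv] by blast
    define u where "u = z l"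
    have uO: "u \<in> Out l" using fp_in[OF z l] unfolding u_def .
    have "fp (H u) z" using z unfolding fp_def H_def h_def u_def by auto
    hence oF: "z = F u" using fp_un[OF Hv[OF uO]] F[OF uO] by blast
    have "u = h l (\<omega> z l)" using z l unfolding fp_def u_def by auto
    hence "u = (if J u = J u1 then u2 else u1)" using oF by (simp add: h_def J_def)
    thus False using ne by (auto split: if_splits)
  qed
  have fpH: "z = F (z l)" if "fp g z" "\<forall>k<N. k \<noteq> l \<longrightarrow> g k = h1 k" for g z
  proof -
    have uO: "z l \<in> Out l" using fp_in[OF that(1) l] .
    have "fp (H (z l)) z" using that unfolding fp_def H_def by auto
    thus ?thesis using fp_un[OF Hv[OF uO]] F[OF uO] by blast
  qed
  have e1: "z1 = F (z1 l)" by (rule fpH[OF z1]) simp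
  have e2: "z2 = F (z2 l)" by (rule fpH[OF z2]) (use eq in auto)
  have "\<omega> z1 l = J (z1 l)" unfolding J_def using arg_cong[where f="\<lambda>z. \<omega> z l", OF e1] .
  also have "\<dots> = J (z2 l)" using Jc fp_in[OF z1 l] fp_in[OF z2 l] by blast
  also have "\<dots> = \<omega> z2 l" unfolding J_def using arg_cong[where f="\<lambda>z. \<omega> z l", OF e2] by (rule sym)
  finally show ?thesis .
qed

end



lemma upd_PiE: "g \<in> PiE S T \<Longrightarrow> x \<in> S \<Longrightarrow> y \<in> T x \<Longrightarrow> g(x:=y) \<in> PiE S T"
  by (auto simp: PiE_def extensional_def Pi_def)

lemma nosig0:
  assumes "l < N"
  shows "\<And>a a'. a \<in> PiE {..<N} A \<Longrightarrow> a' \<in> PiE {..<N} A \<Longrightarrow>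
     card {k\<in>{..<N}. a k \<noteq> a' k} = n \<Longrightarrow>
     (\<forall>k<N. a k \<noteq> a' k \<longrightarrow> k \<noteq> l \<and> \<not> signals N A f k l) \<Longrightarrow> f l a = f l a'"
proof (induction n)
  case 0
  hence "\<forall>k<N. a k = a' k" by auto
  hence "a = a'" by (intro PiE_ext[OF 0(1) 0(2)]) simp
  thus ?case by simp
next
  case (Suc n)
  have "{k\<in>{..<N::nat}. a k \<noteq> a' k} \<noteq> {}" using Suc.prems(3) by (metis card.empty nat.distinct(1))
  then obtain k where k: "k < N" "a k \<noteq> a' k" by auto
  define a'' where "a'' = a(k := a' k)"
  have a''A: "a'' \<in> PiE {..<N} A" unfolding a''_def using Suc.prems(1,2) k
    using upd_PiE[OF Suc.prems(1), of k "a' k"] PiE_mem[OF Suc.prems(2), of k] k(1) by simp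
  have nk: "k \<noteq> l" "\<not> signals N A f k l" using Suc.prems(4) k by auto
  have fa: "f l a = f l a''"
  proof (rule ccontr)
    assume ne: "f l a \<noteq> f l a''"
    have "\<forall>j. j \<noteq> k \<longrightarrow> a j = a'' j" unfolding a''_def by simp
    hence "signals N A f k l" unfolding signals_def using k(1) assms nk(1) Suc.prems(1) a''A ne by blast
    thus False using nk by simp
  qed
  have "{j\<in>{..<N}. a'' j \<noteq> a' j} = {j\<in>{..<N}. a j \<noteq> a' j} - {k}"
    unfolding a''_def by auto
  hence cn: "card {j\<in>{..<N}. a'' j \<noteq> a' j} = n" using Suc.prems(3) k by simp
  have 4: "\<forall>j<N. a'' j \<noteq> a' j \<longrightarrow> j \<noteq> l \<and> \<not> signals N A f j l"
    using Suc.prems(4) unfolding a''_def by auto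
  have "f l a'' = f l a'" by (rule Suc.IH[OF a''A Suc.prems(2) cn 4])
  then show ?case using fa by simp
qed

lemma nosig:
  assumes "l < N" "a \<in> PiE {..<N} A" "a' \<in> PiE {..<N} A" "\<beta> \<in> A l"
    and "\<forall>k<N. k \<noteq> l \<longrightarrow> a k \<noteq> a' k \<longrightarrow> \<not> signals N A f k l"
  shows "f l (a(l := \<beta>)) = f l (a'(l := \<beta>))"
proof -
  have 1: "a(l:=\<beta>) \<in> PiE {..<N} A" using upd_PiE[OF assms(2), of l \<beta>] assms(1,4) by simp
  have 2: "a'(l:=\<beta>) \<in> PiE {..<N} A" using upd_PiE[OF assms(3), of l \<beta>] assms(1,4) by simp
  have 3: "\<forall>k<N. (a(l:=\<beta>)) k \<noteq> (a'(l:=\<beta>)) k \<longrightarrow> k \<noteq> l \<and> \<not> signals N A f k l"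
    using assms(5) by auto
  show ?thesis by (rule nosig0[OF assms(1) 1 2 refl 3])
qed




locale det = pf N In Out \<omega> for N In Out \<omega> +
  fixes A :: "nat \<Rightarrow> 'a set" and f :: "nat \<Rightarrow> (nat \<Rightarrow> 'a) \<Rightarrow> 'x"
    and s :: "nat \<Rightarrow> 'a \<Rightarrow> nat \<Rightarrow> nat" and t :: "nat \<Rightarrow> 'a \<Rightarrow> nat \<Rightarrow> 'x"
  assumes s_out: "\<And>k \<beta> i. k<N \<Longrightarrow> \<beta> \<in> A k \<Longrightarrow> i \<in> In k \<Longrightarrow> s k \<beta> i \<in> Out k"
  and key: "\<And>a z k. a \<in> PiE {..<N} A \<Longrightarrow> fp (\<lambda>k. s k (a k)) z \<Longrightarrow> k < N \<Longrightarrow> t k (a k) (\<omega> z k) = f k a"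
begin

lemma hvalid: "a \<in> PiE {..<N} A \<Longrightarrow> \<forall>k<N. \<forall>i\<in>In k. s k (a k) i \<in> Out k"
proof (intro allI impI ballI)
  fix k i assume a: "a \<in> PiE {..<N} A" and k: "k < N" and i: "i \<in> In k"
  have "a k \<in> A k" using PiE_mem[OF a, of k] k by simp
  then show "s k (a k) i \<in> Out k" using s_out[OF k _ i] by blast
qed

lemma view:
  assumes a: "a \<in> PiE {..<N} A" and z: "fp (\<lambda>k. s k (a k)) z" and l: "l < N" and \<beta>: "\<beta> \<in> A l"
  shows "t l \<beta> (\<omega> z l) = f l (a(l:=\<beta>))"
proof -
  have a': "a(l:=\<beta>) \<in> PiE {..<N} A" using upd_PiE[OF a, of l \<beta>] l \<beta> by simp
  obtain z' where z': "fp (\<lambda>k. s k ((a(l:=\<beta>)) k)) z'" using fp_ex[OF hvalid[OF a']] by blast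
  have "\<omega> z l = \<omega> z' l"
    by (rule indep[OF l hvalid[OF a] hvalid[OF a'] _ z z']) simp
  moreover have "t l ((a(l:=\<beta>)) l) (\<omega> z' l) = f l (a(l:=\<beta>))" by (rule key[OF a' z' l])
  hence "t l \<beta> (\<omega> z' l) = f l (a(l:=\<beta>))" by (simp only: fun_upd_same)
  ultimately show ?thesis by (simp only:)
qed

lemma soc: "siblings_on_cycles N (signals N A f)"
proof (rule ccontr)
  let ?E = "signals N A f"
  assume "\<not> siblings_on_cycles N ?E"
  then obtain vs where cyc: "directed_cycle N ?E vs"
    and nosib0: "\<forall>s1\<in>set vs. \<forall>s2\<in>set vs. s1 \<noteq> s2 \<longrightarrow> \<not> (\<exists>v<N. ?E v s1 \<and> ?E v s2)"
    unfolding siblings_on_cycles_def by blast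
  define c where "c = length vs"
  define v where "v j = vs ! j" for j
  define sc where "sc j = Suc j mod c" for j
  define pr where "pr m = (if m = 0 then c - 1 else m - 1)" for m
  have c2: "c \<ge> 2" and dist: "distinct vs" and vN: "set vs \<subseteq> {..<N}"
    using cyc unfolding directed_cycle_def c_def by auto
  have vset: "k \<in> set vs \<longleftrightarrow> (\<exists>m<c. v m = k)" for k
    unfolding v_def c_def by (auto simp: in_set_conv_nth)
  have vin: "v j \<in> set vs" if "j < c" for j using vset that by blast
  have vlt: "v j < N" if "j < c" for j using vN vin[OF that] by auto
  have vinj: "v j = v j' \<longleftrightarrow> j = j'" if "j < c" "j' < c" for j j'
    using nth_eq_iff_index_eq[OF dist] that unfolding v_def c_def by auto
  have sc_lt: "sc j < c" for j using c2 unfolding sc_def by simp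
  have pr_lt: "pr m < c" if "m < c" for m using that c2 unfolding pr_def by auto
  have sc_pr: "sc (pr m) = m" if "m < c" for m
  proof (cases "m = 0")
    case True thus ?thesis using c2 unfolding sc_def pr_def by simp
  next
    case False thus ?thesis using that unfolding sc_def pr_def by simp
  qed
  have scf: "sc j = (if Suc j = c then 0 else Suc j)" if "j < c" for j
  proof (cases "Suc j = c")
    case True thus ?thesis unfolding sc_def by simp
  next
    case False hence "Suc j < c" using that by simp
    thus ?thesis unfolding sc_def by simp
  qed
  have sc_inj: "j = j'" if "sc j = sc j'" "j < c" "j' < c" for j j'
    using scf[OF that(2)] scf[OF that(3)] that(1) by (auto split: if_splits)
  have pr_ne: "pr m \<noteq> m" if "m < c" for m using that c2 unfolding pr_def by auto
  have edge: "?E (v j) (v (sc j))" if "j < c" for j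
  proof (cases "Suc j < c")
    case True
    hence "sc j = Suc j" unfolding sc_def by simp
    then show ?thesis using cyc True unfolding directed_cycle_def v_def c_def by simp
  next
    case False
    hence "Suc j = c" using that by simp
    hence "j = c - 1" "sc j = 0" using scf[OF that] by auto
    moreover have "vs \<noteq> []" using c2 unfolding c_def by auto
    ultimately show ?thesis using cyc unfolding directed_cycle_def v_def c_def
      by (simp add: last_conv_nth hd_conv_nth)
  qed
  have S1: "m1 = m2" if "m1 < c" "m2 < c" "u < N" "?E u (v m1)" "?E u (v m2)" for u m1 m2
  proof (rule ccontr)
    assume "m1 \<noteq> m2" hence "v m1 \<noteq> v m2" using vinj that(1,2) by auto
    thus False using nosib0 vin[OF that(1)] vin[OF that(2)] that(3-5) by blast
  qed
  have Elt: "u < N" if "?E u w" for u w using that unfolding signals_def by simp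
  have S2: "m' = pr m" if "m < c" "m' < c" "?E (v m') (v m)" for m m'
  proof -
    have "sc m' = m" by (rule S1[OF sc_lt that(1) vlt[OF that(2)] edge[OF that(2)] that(3)])
    hence "sc m' = sc (pr m)" using sc_pr[OF that(1)] by simp
    thus ?thesis using sc_inj pr_lt[OF that(1)] that(2) by blast
  qed
  have "\<forall>j. \<exists>p. j < c \<longrightarrow> (fst p \<in> PiE {..<N} A \<and> snd p \<in> PiE {..<N} A \<and>
        (\<forall>i. i \<noteq> v j \<longrightarrow> fst p i = snd p i) \<and> f (v (sc j)) (fst p) \<noteq> f (v (sc j)) (snd p))"
  proof
    fix j show "\<exists>p. j < c \<longrightarrow> (fst p \<in> PiE {..<N} A \<and> snd p \<in> PiE {..<N} A \<and>
        (\<forall>i. i \<noteq> v j \<longrightarrow> fst p i = snd p i) \<and> f (v (sc j)) (fst p) \<noteq> f (v (sc j)) (snd p))"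
    proof (cases "j < c")
      case True
      then obtain w w' where "w \<in> PiE {..<N} A" "w' \<in> PiE {..<N} A"
        "\<forall>i. i \<noteq> v j \<longrightarrow> w i = w' i" "f (v (sc j)) w \<noteq> f (v (sc j)) w'"
        using edge[OF True] unfolding signals_def by blast
      then show ?thesis by (intro exI[of _ "(w,w')"]) simp
    qed simp
  qed
  from choice[OF this] obtain P where P: "\<And>j. j < c \<Longrightarrow> fst (P j) \<in> PiE {..<N} A \<and> snd (P j) \<in> PiE {..<N} A \<and>
        (\<forall>i. i \<noteq> v j \<longrightarrow> fst (P j) i = snd (P j) i) \<and> f (v (sc j)) (fst (P j)) \<noteq> f (v (sc j)) (snd (P j))"
    by blast
  define W where "W j = fst (P j)" for j
  define W' where "W' j = snd (P j)" for j
  have WA: "W j \<in> PiE {..<N} A" and W'A: "W' j \<in> PiE {..<N} A"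
    and Wag: "\<And>i. i \<noteq> v j \<Longrightarrow> W j i = W' j i" and Wne: "f (v (sc j)) (W j) \<noteq> f (v (sc j)) (W' j)"
    if "j < c" for j using P[OF that] unfolding W_def W'_def by auto
  define \<alpha> where "\<alpha> j = W j (v j)" for j
  define \<alpha>' where "\<alpha>' j = W' j (v j)" for j
  have \<alpha>A: "\<alpha> j \<in> A (v j)" "\<alpha>' j \<in> A (v j)" if "j < c" for j
    using PiE_mem[OF WA[OF that], of "v j"] PiE_mem[OF W'A[OF that], of "v j"] vlt[OF that]
    unfolding \<alpha>_def \<alpha>'_def by auto
  have \<alpha>ne: "\<alpha> j \<noteq> \<alpha>' j" if "j < c" for j
  proof
    assume "\<alpha> j = \<alpha>' j"
    hence "W j = W' j" using Wag[OF that] unfolding \<alpha>_def \<alpha>'_def by (intro ext) metis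
    thus False using Wne[OF that] by simp
  qed
  define b where "b u = (if \<exists>j<c. ?E u (v (sc j)) then W (SOME j. j < c \<and> ?E u (v (sc j))) u else W 0 u)" for u
  have bA: "b u \<in> A u" if "u < N" for u
  proof (cases "\<exists>j<c. ?E u (v (sc j))")
    case True
    hence "(SOME j. j < c \<and> ?E u (v (sc j))) < c" by (metis (mono_tags, lifting) someI_ex)
    thus ?thesis using True PiE_mem[OF WA, of _ u] that unfolding b_def by simp
  next
    case False
    hence "b u = W 0 u" unfolding b_def by (rule if_not_P)
    thus ?thesis using c2 PiE_mem[OF WA, of 0 u] that by simp
  qed
  have bW: "b u = W j u" if "u < N" "j < c" "?E u (v (sc j))" for u j
  proof -
    define j' where "j' = (SOME j. j < c \<and> ?E u (v (sc j)))"
    have ex: "\<exists>j. j < c \<and> ?E u (v (sc j))" using that by blast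
    have j': "j' < c \<and> ?E u (v (sc j'))" unfolding j'_def by (rule someI_ex[OF ex])
    have "sc j' = sc j" by (rule S1[OF sc_lt sc_lt that(1)]) (use j' that in simp_all)
    hence "j' = j" using sc_inj j' that by blast
    have "b u = W j' u" unfolding b_def j'_def[symmetric] using that by (intro if_P) blast
    thus ?thesis using \<open>j' = j\<close> by simp
  qed
  define idx where "idx k = (SOME m. m < c \<and> v m = k)" for k
  have idx_v: "idx (v m) = m" if "m < c" for m
  proof -
    have ex: "\<exists>m'. m' < c \<and> v m' = v m" using that by blast
    have "idx (v m) < c \<and> v (idx (v m)) = v m" unfolding idx_def by (rule someI_ex[OF ex])
    thus ?thesis using vinj that by blast
  qed
  define R where "R j = restrict (\<lambda>\<beta>. f (v (sc j)) ((W j)(v (sc j) := \<beta>))) (A (v (sc j)))" for j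
  define Vw where "Vw l a = restrict (\<lambda>\<beta>. f l (a(l:=\<beta>))) (A l)" for l a
  define Cond where "Cond k i = (restrict (\<lambda>\<beta>. t k \<beta> i) (A k) = R (pr (idx k)))" for k i
  define G where "G k i = (if k \<in> set vs then
      (if Cond k i = (idx k \<noteq> 0) then \<alpha> (idx k) else \<alpha>' (idx k))
      else b k)" for k i
  have GA: "G k i \<in> A k" if "k < N" for k i
  proof (cases "k \<in> set vs")
    case True
    then obtain m where m: "m < c" "v m = k" using vset by blast
    have "G k i = \<alpha> m \<or> G k i = \<alpha>' m" unfolding G_def using True m(2)[symmetric] idx_v[OF m(1)] by simp
    thus ?thesis using \<alpha>A[OF m(1)] m(2) by auto
  next
    case False
    thus ?thesis using bA[OF that] unfolding G_def by simp
  qed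
  define h where "h k i = s k (G k i) i" for k i
  have hv: "\<forall>k<N. \<forall>i\<in>In k. h k i \<in> Out k" unfolding h_def
  proof (intro allI impI ballI)
    fix k i assume k: "k < N" and i: "i \<in> In k"
    show "s k (G k i) i \<in> Out k" by (rule s_out[OF k GA[OF k] i])
  qed
  obtain z where z: "fp h z" using fp_ex[OF hv] by blast
  define a where "a = restrict (\<lambda>k. G k (\<omega> z k)) {..<N}"
  have aA: "a \<in> PiE {..<N} A" unfolding a_def using GA by (simp add: restrict_PiE_iff)
  have ak: "a k = G k (\<omega> z k)" if "k < N" for k unfolding a_def using that by simp
  have za: "fp (\<lambda>k. s k (a k)) z" unfolding fp_def
  proof (intro conjI allI impI)
    show "z \<in> PiE {..<N} Out" using z unfolding fp_def by blast
    fix k assume k: "k < N"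
    have "z k = h k (\<omega> z k)" using z k unfolding fp_def by blast
    thus "z k = s k (a k) (\<omega> z k)" unfolding h_def ak[OF k] .
  qed
  have Vwa: "restrict (\<lambda>\<beta>. t l \<beta> (\<omega> z l)) (A l) = Vw l a" if "l < N" for l
    unfolding Vw_def using view[OF aA za that] by (intro restrict_ext) simp
  have av: "a (v m) = (if (Vw (v m) a = R (pr m)) = (m \<noteq> 0) then \<alpha> m else \<alpha>' m)" if "m < c" for m
  proof -
    have "Cond (v m) (\<omega> z (v m)) = (Vw (v m) a = R (pr m))"
      unfolding Cond_def idx_v[OF that] Vwa[OF vlt[OF that]] ..
    thus ?thesis using ak[OF vlt[OF that]] vin[OF that] unfolding G_def idx_v[OF that] by simp
  qed
  have acase: "a (v m) = \<alpha> m \<or> a (v m) = \<alpha>' m" if "m < c" for m using av[OF that] by simp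
  have C0: "Vw (v m) a = Vw (v m) w" if m: "m < c" and wA: "w \<in> PiE {..<N} A"
    and wp: "a (v (pr m)) = w (v (pr m))"
    and wb: "\<And>k. k < N \<Longrightarrow> k \<notin> set vs \<Longrightarrow> ?E k (v m) \<Longrightarrow> w k = W (pr m) k" for m w
    unfolding Vw_def
  proof (intro restrict_ext nosig[OF vlt[OF m] aA wA])
    fix \<beta> assume "\<beta> \<in> A (v m)" thus "\<beta> \<in> A (v m)" .
  next
    show "\<forall>k<N. k \<noteq> v m \<longrightarrow> a k \<noteq> w k \<longrightarrow> \<not> ?E k (v m)"
    proof (intro allI impI notI)
      fix k assume k: "k < N" "k \<noteq> v m" "a k \<noteq> w k" "?E k (v m)"
      show False
      proof (cases "k \<in> set vs")
        case True
        then obtain m' where m': "m' < c" "v m' = k" using vset by blast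
        hence "m' = pr m" using S2[OF m m'(1)] k(4) by simp
        thus False using wp k(3) m' by simp
      next
        case False
        have "?E k (v (sc (pr m)))" using k(4) sc_pr[OF m] by simp
        hence "b k = W (pr m) k" using bW[OF k(1) pr_lt[OF m]] by simp
        moreover have "a k = b k" using ak[OF k(1)] False unfolding G_def by simp
        ultimately show False using wb[OF k(1) False k(4)] k(3) by simp
      qed
    qed
  qed
  define e where "e m = (a (v m) = \<alpha>' m)" for m
  have eq: "(Vw (v m) a = R (pr m)) \<longleftrightarrow> \<not> e (pr m)" if m: "m < c" for m
  proof -
    have pm: "pr m < c" using pr_lt[OF m] .
    have vne: "v m \<noteq> v (pr m)" using vinj[OF m pm] pr_ne[OF m] by simp
    have RW: "R (pr m) = Vw (v m) (W (pr m))" unfolding R_def Vw_def using sc_pr[OF m] by simp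
    show ?thesis
    proof (cases "e (pr m)")
      case False
      hence "a (v (pr m)) = \<alpha> (pr m)" using acase[OF pm] unfolding e_def by auto
      hence "Vw (v m) a = Vw (v m) (W (pr m))"
        by (intro C0[OF m WA[OF pm]]) (simp_all add: \<alpha>_def)
      thus ?thesis using RW False by simp
    next
      case True
      hence "a (v (pr m)) = \<alpha>' (pr m)" unfolding e_def by auto
      hence "Vw (v m) a = Vw (v m) (W' (pr m))"
      proof (intro C0[OF m W'A[OF pm]])
        fix k assume "k < N" "k \<notin> set vs" "?E k (v m)"
        moreover have "k \<noteq> v (pr m)" using calculation(2) vin[OF pm] by blast
        ultimately show "W' (pr m) k = W (pr m) k" using Wag[OF pm] by metis
      qed (simp add: \<alpha>'_def)
      moreover have "Vw (v m) (W' (pr m)) \<noteq> Vw (v m) (W (pr m))"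
      proof
        assume H: "Vw (v m) (W' (pr m)) = Vw (v m) (W (pr m))"
        define \<beta>0 where "\<beta>0 = W (pr m) (v m)"
        have b0: "\<beta>0 \<in> A (v m)" unfolding \<beta>0_def using PiE_mem[OF WA[OF pm], of "v m"] vlt[OF m] by simp
        have "W' (pr m) (v m) = \<beta>0" unfolding \<beta>0_def using Wag[OF pm vne] by simp
        hence 1: "(W' (pr m))(v m := \<beta>0) = W' (pr m)" by auto
        have 2: "(W (pr m))(v m := \<beta>0) = W (pr m)" unfolding \<beta>0_def by simp
        have "f (v m) (W' (pr m)) = f (v m) (W (pr m))"
          using fun_cong[OF H, of \<beta>0] b0 1 2 unfolding Vw_def by simp
        thus False using Wne[OF pm] sc_pr[OF m] by simp
      qed
      ultimately show ?thesis using RW True by simp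
    qed
  qed
  have rec: "e m \<longleftrightarrow> (if m = 0 then \<not> e (pr m) else e (pr m))" if m: "m < c" for m
  proof -
    have A1: "a (v m) = (if (\<not> e (pr m)) = (m \<noteq> 0) then \<alpha> m else \<alpha>' m)"
      using av[OF m] unfolding eq[OF m] .
    have E: "e m = (a (v m) = \<alpha>' m)" unfolding e_def ..
    show ?thesis using A1 E \<alpha>ne[OF m] by (cases "m = 0"; cases "e (pr m)") auto
  qed
  have all: "e m = e 0" if "m < c" for m
    using that
  proof (induction m)
    case 0 show ?case by simp
  next
    case (Suc m)
    hence "pr (Suc m) = m" unfolding pr_def by simp
    thus ?case using rec[OF Suc.prems] Suc by simp
  qed
  have "e 0 \<longleftrightarrow> \<not> e (c - 1)" using rec[of 0] c2 unfolding pr_def by simp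
  moreover have "e (c - 1) = e 0" using all[of "c - 1"] c2 by simp
  ultimately show False by simp
qed

end



lemma sum_delta_mult:
  assumes "finite S"
  shows "(\<Sum>i\<in>S. g i * (if i = y then 1 else (0::real))) = (if y \<in> S then g y else 0)"
proof -
  have "(\<Sum>i\<in>S. g i * (if i = y then 1 else (0::real))) = (\<Sum>i\<in>S. if i = y then g y else 0)"
    by (rule sum.cong) auto
  also have "\<dots> = (if y \<in> S then g y else 0)" using assms by simp
  finally show ?thesis .
qed

lemma compose_delta:
  assumes om: "\<omega> \<in> PiE {..<N} Out \<rightarrow> PiE {..<N} In" and fin: "\<forall>k<N. finite (In k) \<and> finite (Out k)"
  shows "compose N In Out Q (delta_fun \<omega>) x a =
     (\<Sum>ov\<in>PiE {..<N} Out. \<Prod>k<N. Q k (x k) (ov k) (a k) (\<omega> ov k))"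
proof -
  have fI: "finite (PiE {..<N} In)" using fin by (intro finite_PiE) auto
  have "compose N In Out Q (delta_fun \<omega>) x a =
     (\<Sum>ov\<in>PiE {..<N} Out. \<Sum>i\<in>PiE {..<N} In. (\<Prod>k<N. Q k (x k) (ov k) (a k) (i k)) * (if i = \<omega> ov then 1 else 0))"
    unfolding compose_def delta_fun_def by (rule sum.swap)
  also have "\<dots> = (\<Sum>ov\<in>PiE {..<N} Out. \<Prod>k<N. Q k (x k) (ov k) (a k) (\<omega> ov k))"
  proof (rule sum.cong[OF refl])
    fix ov assume ov: "ov \<in> PiE {..<N} Out"
    have "\<omega> ov \<in> PiE {..<N} In" using om ov by blast
    thus "(\<Sum>i\<in>PiE {..<N} In. (\<Prod>k<N. Q k (x k) (ov k) (a k) (i k)) * (if i = \<omega> ov then 1 else 0)) =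
        (\<Prod>k<N. Q k (x k) (ov k) (a k) (\<omega> ov k))"
      by (subst sum_delta_mult[OF fI]) simp
  qed
  finally show ?thesis .
qed

lemma pf_norm:
  fixes R :: "nat \<Rightarrow> nat \<Rightarrow> nat \<Rightarrow> real"
  assumes pf: "process_function N In Out \<omega>" and fin: "\<forall>k<N. finite (In k) \<and> finite (Out k)"
    and R: "\<forall>k<N. \<forall>i\<in>In k. (\<forall>ov\<in>Out k. 0 \<le> R k ov i) \<and> (\<Sum>ov\<in>Out k. R k ov i) = 1"
  shows "(\<Sum>ov\<in>PiE {..<N} Out. \<Prod>k<N. R k (ov k) (\<omega> ov k)) = 1"
proof -
  have om: "\<omega> \<in> PiE {..<N} Out \<rightarrow> PiE {..<N} In" and cp: "classical_process N In Out (delta_fun \<omega>)"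
    using pf unfolding process_function_def by auto
  define Q' :: "nat \<Rightarrow> nat \<Rightarrow> nat \<Rightarrow> nat \<Rightarrow> nat \<Rightarrow> real" where "Q' k x ov a i = R k ov i" for k x ov a i
  define A' :: "nat \<Rightarrow> nat set" where "A' k = {0}" for k
  have li: "local_interventions N A' A' In Out Q'"
    unfolding local_interventions_def Q'_def A'_def using R by simp
  have "\<forall>k<N. finite (A' k) \<and> finite (A' k)" unfolding A'_def by simp
  hence cd: "cond_distr N A' A' (compose N In Out Q' (delta_fun \<omega>))"
    using cp li unfolding classical_process_def by blast
  define a0 :: "nat \<Rightarrow> nat" where "a0 = restrict (\<lambda>k. 0) {..<N}"
  have a0: "a0 \<in> PiE {..<N} A'" unfolding a0_def A'_def by simp
  define T where "T = (\<Sum>ov\<in>PiE {..<N} Out. \<Prod>k<N. R k (ov k) (\<omega> ov k))"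
  have cT: "compose N In Out Q' (delta_fun \<omega>) x a = T" for x a
    unfolding compose_delta[OF om fin] T_def Q'_def ..
  have "(\<Sum>x\<in>PiE {..<N} A'. compose N In Out Q' (delta_fun \<omega>) x a0) = 1"
    using cd a0 unfolding cond_distr_def by blast
  hence "(\<Sum>x\<in>PiE {..<N} A'. T) = 1" unfolding cT .
  moreover have "card (PiE {..<N} A') = 1" unfolding A'_def by (simp add: card_PiE)
  ultimately show ?thesis unfolding T_def by simp
qed

lemma prod_ind: "(\<Prod>k<(n::nat). if P k then 1 else (0::real)) = (if \<forall>k<n. P k then 1 else 0)"
  by (induction n) (simp_all add: less_Suc_eq)

lemma pf_uniq:
  assumes pf: "process_function N In Out \<omega>" and fin: "\<forall>k<N. finite (In k) \<and> finite (Out k)"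
    and h: "\<forall>k<N. \<forall>i\<in>In k. h k i \<in> Out k"
  shows "\<exists>!z. z \<in> PiE {..<N} Out \<and> (\<forall>k<N. z k = h k (\<omega> z k))"
proof -
  define R :: "nat \<Rightarrow> nat \<Rightarrow> nat \<Rightarrow> real" where "R k ov i = (if ov = h k i then 1 else 0)" for k ov i
  have "\<forall>k<N. \<forall>i\<in>In k. (\<forall>ov\<in>Out k. 0 \<le> R k ov i) \<and> (\<Sum>ov\<in>Out k. R k ov i) = 1"
    unfolding R_def using h fin by simp
  hence "(\<Sum>ov\<in>PiE {..<N} Out. \<Prod>k<N. R k (ov k) (\<omega> ov k)) = 1" by (rule pf_norm[OF pf fin])
  hence s1: "(\<Sum>ov\<in>PiE {..<N} Out. if (\<forall>k<N. ov k = h k (\<omega> ov k)) then 1 else (0::real)) = 1"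
    unfolding R_def prod_ind .
  have fO: "finite (PiE {..<N} Out)" using fin by (intro finite_PiE) auto
  define S where "S = {z \<in> PiE {..<N} Out. \<forall>k<N. z k = h k (\<omega> z k)}"
  have "(\<Sum>ov\<in>PiE {..<N} Out. if (\<forall>k<N. ov k = h k (\<omega> ov k)) then 1 else (0::real)) =
     (\<Sum>ov\<in>S. 1)" unfolding S_def
    by (rule sum.inter_filter[OF fO, symmetric])
  hence "real (card S) = 1" using s1 by simp
  hence "card S = 1" by simp
  then obtain z0 where eq: "S = {z0}" by (rule card_1_singletonE)
  have "z0 \<in> S" unfolding eq by simp
  hence 1: "z0 \<in> PiE {..<N} Out \<and> (\<forall>k<N. z0 k = h k (\<omega> z0 k))" unfolding S_def by blast
  have 2: "z = z0" if "z \<in> PiE {..<N} Out \<and> (\<forall>k<N. z k = h k (\<omega> z k))" for z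
  proof -
    have "z \<in> S" unfolding S_def using that by blast
    thus ?thesis unfolding eq by (rule singletonD)
  qed
  show ?thesis
  proof (rule ex1I[of _ z0])
    show "z0 \<in> PiE {..<N} Out \<and> (\<forall>k<N. z0 k = h k (\<omega> z0 k))" by (rule 1)
  next
    fix z assume "z \<in> PiE {..<N} Out \<and> (\<forall>k<N. z k = h k (\<omega> z k))"
    thus "z = z0" by (rule 2)
  qed
qed




lemma pos_ex:
  fixes g :: "'b \<Rightarrow> real"
  assumes "finite S" "0 < (\<Sum>x\<in>S. g x)"
  shows "\<exists>x\<in>S. 0 < g x"
proof (rule ccontr)
  assume "\<not> ?thesis" hence "\<forall>x\<in>S. g x \<le> 0" by auto
  hence "(\<Sum>x\<in>S. g x) \<le> 0" by (intro sum_nonpos) auto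
  thus False using assms(2) by simp
qed

theorem corollary7:
  fixes N :: nat and A :: "nat \<Rightarrow> 'a set" and X :: "nat \<Rightarrow> 'x set"
    and f :: "nat \<Rightarrow> (nat \<Rightarrow> 'a) \<Rightarrow> 'x"
  assumes "\<forall>k<N. finite (A k) \<and> A k \<noteq> {}"
    and "\<forall>k<N. finite (X k) \<and> X k \<noteq> {}"
    and "\<forall>k<N. \<forall>a\<in>PiE {..<N} A. f k a \<in> X k"
    and "\<not> siblings_on_cycles N (signals N A f)"
  shows "antinomic N A X (det_corr N f)"
  unfolding antinomic_def det_consistent_def
proof
  assume "\<exists>In Out Q w. (\<forall>k<N. finite (In k) \<and> finite (Out k)) \<and>
        local_interventions N A X In Out Q \<and> det_extrema_polytope N In Out w \<and>
        (\<forall>a\<in>PiE {..<N} A. \<forall>x\<in>PiE {..<N} X. det_corr N f x a = compose N In Out Q w x a)"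
  then obtain In Out Q w where fin: "\<forall>k<N. finite (In k) \<and> finite (Out k)"
    and li: "local_interventions N A X In Out Q" and pol: "det_extrema_polytope N In Out w"
    and eqp: "\<forall>a\<in>PiE {..<N} A. \<forall>x\<in>PiE {..<N} X. det_corr N f x a = compose N In Out Q w x a"
    by blast
  from pol obtain n :: nat and c :: "nat \<Rightarrow> real" and \<Omega> where cj: "\<forall>j<n. 0 \<le> c j \<and> process_function N In Out (\<Omega> j)"
    and cs: "(\<Sum>j<n. c j) = 1"
    and wd: "\<forall>i\<in>PiE {..<N} In. \<forall>ov\<in>PiE {..<N} Out. w i ov = (\<Sum>j<n. c j * delta_fun (\<Omega> j) i ov)"
    unfolding det_extrema_polytope_def by blast
  have om: "\<Omega> j \<in> PiE {..<N} Out \<rightarrow> PiE {..<N} In" if "j < n" for j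
    using cj that unfolding process_function_def by blast
  have fI: "finite (PiE {..<N} In)" using fin by (intro finite_PiE) auto
  have fO: "finite (PiE {..<N} Out)" using fin by (intro finite_PiE) auto
  have fX: "finite (PiE {..<N} X)" using assms(2) by (intro finite_PiE) auto
  define P where "P j x a = compose N In Out Q (delta_fun (\<Omega> j)) x a" for j x a
  have Pform: "P j x a = (\<Sum>ov\<in>PiE {..<N} Out. \<Prod>k<N. Q k (x k) (ov k) (a k) (\<Omega> j ov k))"
    if "j < n" for j x a
    unfolding P_def by (rule compose_delta[OF om[OF that] fin])
  have Qnn: "0 \<le> Q k x ov \<beta> i" if "k < N" "\<beta> \<in> A k" "i \<in> In k" "x \<in> X k" "ov \<in> Out k" for k x ov \<beta> i
    using li that unfolding local_interventions_def by blast
  have Qsum: "(\<Sum>x\<in>X k. \<Sum>ov\<in>Out k. Q k x ov \<beta> i) = 1" if "k < N" "\<beta> \<in> A k" "i \<in> In k" for k \<beta> i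
    using li that unfolding local_interventions_def by blast
  have lin: "compose N In Out Q w x a = (\<Sum>j<n. c j * P j x a)" for x a
  proof -
    have "compose N In Out Q w x a = (\<Sum>i\<in>PiE {..<N} In. \<Sum>ov\<in>PiE {..<N} Out. \<Sum>j<n.
        c j * ((\<Prod>k<N. Q k (x k) (ov k) (a k) (i k)) * delta_fun (\<Omega> j) i ov))"
      unfolding compose_def
    proof (intro sum.cong refl)
      fix i ov assume i: "i \<in> PiE {..<N} In" and ov: "ov \<in> PiE {..<N} Out"
      have "w i ov = (\<Sum>j<n. c j * delta_fun (\<Omega> j) i ov)" using wd i ov by blast
      thus "(\<Prod>k<N. Q k (x k) (ov k) (a k) (i k)) * w i ov =
          (\<Sum>j<n. c j * ((\<Prod>k<N. Q k (x k) (ov k) (a k) (i k)) * delta_fun (\<Omega> j) i ov))"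
        by (simp add: sum_distrib_left mult.left_commute)
    qed
    also have "\<dots> = (\<Sum>i\<in>PiE {..<N} In. \<Sum>j<n. \<Sum>ov\<in>PiE {..<N} Out.
        c j * ((\<Prod>k<N. Q k (x k) (ov k) (a k) (i k)) * delta_fun (\<Omega> j) i ov))"
      by (intro sum.cong refl) (rule sum.swap)
    also have "\<dots> = (\<Sum>j<n. \<Sum>i\<in>PiE {..<N} In. \<Sum>ov\<in>PiE {..<N} Out.
        c j * ((\<Prod>k<N. Q k (x k) (ov k) (a k) (i k)) * delta_fun (\<Omega> j) i ov))"
      by (rule sum.swap)
    also have "\<dots> = (\<Sum>j<n. c j * P j x a)"
      unfolding P_def compose_def by (simp add: sum_distrib_left)
    finally show ?thesis .
  qed
  have Pnn: "0 \<le> P j x a" if j: "j < n" and a: "a \<in> PiE {..<N} A" and x: "x \<in> PiE {..<N} X" for j x a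
    unfolding Pform[OF j]
  proof (intro sum_nonneg prod_nonneg)
    fix ov k assume ov: "ov \<in> PiE {..<N} Out" and k: "k \<in> {..<N}"
    have "\<Omega> j ov \<in> PiE {..<N} In" using om[OF j] ov by blast
    thus "0 \<le> Q k (x k) (ov k) (a k) (\<Omega> j ov k)"
      using k by (intro Qnn PiE_mem[OF a] PiE_mem[OF x] PiE_mem[OF ov]) auto
  qed
  have Psum: "(\<Sum>x\<in>PiE {..<N} X. P j x a) = 1" if j: "j < n" and a: "a \<in> PiE {..<N} A" for j a
  proof -
    have pfj: "process_function N In Out (\<Omega> j)" using cj j by blast
    define R where "R k ov i = (\<Sum>y\<in>X k. Q k y ov (a k) i)" for k ov i
    have R: "\<forall>k<N. \<forall>i\<in>In k. (\<forall>ov\<in>Out k. 0 \<le> R k ov i) \<and> (\<Sum>ov\<in>Out k. R k ov i) = 1"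
    proof (intro allI impI ballI conjI)
      fix k i assume k: "k < N" and i: "i \<in> In k"
      have ak: "a k \<in> A k" using PiE_mem[OF a, of k] k by simp
      show "0 \<le> R k ov i" if "ov \<in> Out k" for ov
        unfolding R_def by (intro sum_nonneg Qnn[OF k ak i _ that])
      show "(\<Sum>ov\<in>Out k. R k ov i) = 1" unfolding R_def
        using Qsum[OF k ak i] by (subst sum.swap) simp
    qed
    have "(\<Sum>x\<in>PiE {..<N} X. P j x a) = (\<Sum>x\<in>PiE {..<N} X. \<Sum>ov\<in>PiE {..<N} Out. \<Prod>k<N. Q k (x k) (ov k) (a k) (\<Omega> j ov k))"
      using Pform[OF j] by simp
    also have "\<dots> = (\<Sum>ov\<in>PiE {..<N} Out. \<Sum>x\<in>PiE {..<N} X. \<Prod>k<N. Q k (x k) (ov k) (a k) (\<Omega> j ov k))"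
      by (rule sum.swap)
    also have "\<dots> = (\<Sum>ov\<in>PiE {..<N} Out. \<Prod>k<N. R k (ov k) (\<Omega> j ov k))"
    proof (rule sum.cong[OF refl])
      fix ov
      show "(\<Sum>x\<in>PiE {..<N} X. \<Prod>k<N. Q k (x k) (ov k) (a k) (\<Omega> j ov k)) = (\<Prod>k<N. R k (ov k) (\<Omega> j ov k))"
        unfolding R_def using assms(2)
        by (subst prod_sum_PiE[where f = "\<lambda>k y. Q k y (ov k) (a k) (\<Omega> j ov k)"]) auto
    qed
    also have "\<dots> = 1" by (rule pf_norm[OF pfj fin R])
    finally show ?thesis .
  qed
  have Ple: "P j x a \<le> 1" if j: "j < n" and a: "a \<in> PiE {..<N} A" and x: "x \<in> PiE {..<N} X" for j x a
  proof -
    have "P j x a \<le> (\<Sum>x\<in>PiE {..<N} X. P j x a)"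
      by (rule member_le_sum[OF x _ fX]) (intro Pnn[OF j a]; blast)
    thus ?thesis using Psum[OF j a] by simp
  qed
  obtain j0 where j0: "j0 < n" "0 < c j0" using pos_ex[of "{..<n}" c] cs by auto
  define fa where "fa a = restrict (\<lambda>k. f k a) {..<N}" for a
  have faX: "fa a \<in> PiE {..<N} X" if "a \<in> PiE {..<N} A" for a
    unfolding fa_def using assms(3) that by (simp add: restrict_PiE_iff)
  have dc1: "det_corr N f (fa a) a = 1" for a unfolding det_corr_def fa_def by simp
  have P1: "P j0 (fa a) a = 1" if a: "a \<in> PiE {..<N} A" for a
  proof -
    have "1 = (\<Sum>j<n. c j * P j (fa a) a)" using eqp a faX[OF a] dc1[of a] lin by metis
    hence "(\<Sum>j<n. c j * (1 - P j (fa a) a)) = 0" using cs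
      by (simp add: right_diff_distrib sum_subtractf)
    moreover have "\<forall>j\<in>{..<n}. 0 \<le> c j * (1 - P j (fa a) a)"
      using cj Ple[OF _ a faX[OF a]] by (auto intro!: mult_nonneg_nonneg)
    ultimately have "c j0 * (1 - P j0 (fa a) a) = 0" using j0(1)
      by (subst (asm) sum_nonneg_eq_0_iff) auto
    thus ?thesis using j0(2) by simp
  qed
  have P0: "P j0 x a = 0" if a: "a \<in> PiE {..<N} A" and x: "x \<in> PiE {..<N} X" and ne: "x \<noteq> fa a" for x a
  proof -
    have "1 = P j0 (fa a) a + (\<Sum>y\<in>PiE {..<N} X - {fa a}. P j0 y a)"
      using Psum[OF j0(1) a] sum.remove[OF fX faX[OF a], of "\<lambda>y. P j0 y a"] by simp
    hence "(\<Sum>y\<in>PiE {..<N} X - {fa a}. P j0 y a) = 0" using P1[OF a] by simp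
    moreover have "finite (PiE {..<N} X - {fa a})" using fX by simp
    ultimately have "\<forall>y\<in>PiE {..<N} X - {fa a}. P j0 y a = 0"
      using Pnn[OF j0(1) a] by (subst (asm) sum_nonneg_eq_0_iff) auto
    thus ?thesis using x ne by blast
  qed
  define st where "st k \<beta> i = (SOME p. fst p \<in> X k \<and> snd p \<in> Out k \<and> 0 < Q k (fst p) (snd p) \<beta> i)" for k \<beta> i
  have st: "fst (st k \<beta> i) \<in> X k \<and> snd (st k \<beta> i) \<in> Out k \<and> 0 < Q k (fst (st k \<beta> i)) (snd (st k \<beta> i)) \<beta> i"
    if k: "k < N" and \<beta>: "\<beta> \<in> A k" and i: "i \<in> In k" for k \<beta> i
  proof -
    obtain x where x: "x \<in> X k" "0 < (\<Sum>ov\<in>Out k. Q k x ov \<beta> i)"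
      using pos_ex[of "X k" "\<lambda>x. \<Sum>ov\<in>Out k. Q k x ov \<beta> i"] Qsum[OF k \<beta> i] assms(2) k by auto
    obtain ov where ov: "ov \<in> Out k" "0 < Q k x ov \<beta> i"
      using pos_ex[of "Out k" "\<lambda>ov. Q k x ov \<beta> i"] x(2) fin k by auto
    have "\<exists>p. fst p \<in> X k \<and> snd p \<in> Out k \<and> 0 < Q k (fst p) (snd p) \<beta> i"
      using x ov by (intro exI[of _ "(x, ov)"]) simp
    thus ?thesis unfolding st_def by (rule someI_ex)
  qed
  define s where "s k \<beta> i = snd (st k \<beta> i)" for k \<beta> i
  define t where "t k \<beta> i = fst (st k \<beta> i)" for k \<beta> i
  have pfj0: "process_function N In Out (\<Omega> j0)" using cj j0 by blast
  interpret pf N In Out "\<Omega> j0"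
  proof
    show "\<Omega> j0 \<in> PiE {..<N} Out \<rightarrow> PiE {..<N} In" by (rule om[OF j0(1)])
  next
    fix h assume "\<forall>k<N. \<forall>i\<in>In k. h k i \<in> Out k"
    thus "\<exists>!z. z \<in> PiE {..<N} Out \<and> (\<forall>k<N. z k = h k (\<Omega> j0 z k))" by (rule pf_uniq[OF pfj0 fin])
  qed
  have key: "t k (a k) (\<Omega> j0 z k) = f k a"
    if a: "a \<in> PiE {..<N} A" and z: "fp (\<lambda>k. s k (a k)) z" and k: "k < N" for a z k
  proof -
    define x' where "x' = restrict (\<lambda>k. t k (a k) (\<Omega> j0 z k)) {..<N}"
    have zO: "z \<in> PiE {..<N} Out" using z unfolding fp_def by blast
    have zk: "z k' = s k' (a k') (\<Omega> j0 z k')" if "k' < N" for k'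
      using z that unfolding fp_def by blast
    have ak: "a k' \<in> A k'" if "k' < N" for k' using PiE_mem[OF a, of k'] that by simp
    have ik: "\<Omega> j0 z k' \<in> In k'" if "k' < N" for k' by (rule \<omega>_in[OF zO that])
    have xk: "x' k' = t k' (a k') (\<Omega> j0 z k')" if "k' < N" for k' unfolding x'_def using that by simp
    have x'X: "x' \<in> PiE {..<N} X" unfolding x'_def restrict_PiE_iff
      using st[OF _ ak ik] unfolding t_def by blast
    have pos: "0 < (\<Prod>k'<N. Q k' (x' k') (z k') (a k') (\<Omega> j0 z k'))"
    proof (rule prod_pos)
      fix k' assume "k' \<in> {..<N}" hence k': "k' < N" by simp
      have "0 < Q k' (t k' (a k') (\<Omega> j0 z k')) (s k' (a k') (\<Omega> j0 z k')) (a k') (\<Omega> j0 z k')"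
        using st[OF k' ak[OF k'] ik[OF k']] unfolding s_def t_def by blast
      thus "0 < Q k' (x' k') (z k') (a k') (\<Omega> j0 z k')"
        unfolding xk[OF k', symmetric] zk[OF k', symmetric] .
    qed
    have "(\<Prod>k'<N. Q k' (x' k') (z k') (a k') (\<Omega> j0 z k')) \<le> P j0 x' a"
      unfolding Pform[OF j0(1)]
    proof (rule member_le_sum[OF zO _ fO])
      fix ov assume ov: "ov \<in> PiE {..<N} Out - {z}"
      hence ovO: "ov \<in> PiE {..<N} Out" by blast
      show "0 \<le> (\<Prod>k'<N. Q k' (x' k') (ov k') (a k') (\<Omega> j0 ov k'))"
      proof (intro prod_nonneg)
        fix k' assume "k' \<in> {..<N}" hence k': "k' < N" by simp
        show "0 \<le> Q k' (x' k') (ov k') (a k') (\<Omega> j0 ov k')"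
          by (rule Qnn[OF k' ak[OF k'] \<omega>_in[OF ovO k'] PiE_mem[OF x'X] PiE_mem[OF ovO]]) (use k' in simp)+
      qed
    qed
    hence "P j0 x' a \<noteq> 0" using pos by simp
    hence "x' = fa a" using P0[OF a x'X] by blast
    hence "x' k = fa a k" by simp
    thus ?thesis using xk[OF k] k unfolding fa_def by simp
  qed
  interpret det N In Out "\<Omega> j0" A f s t
  proof
    fix k \<beta> i assume "k < N" "\<beta> \<in> A k" "i \<in> In k"
    thus "s k \<beta> i \<in> Out k" using st unfolding s_def by blast
  next
    fix a z k assume "a \<in> PiE {..<N} A" "fp (\<lambda>k. s k (a k)) z" "k < N"
    thus "t k (a k) (\<Omega> j0 z k) = f k a" by (rule key)
  qed
  show False using soc assms(4) by simp
qed


end
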